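(* Let $r\ge1$ and $n\ge2r$. For every integer $p\ge1$, the restricted Casimir polynomial $C_p(x_1,\dots,x_r)$ lies in the subalgebra $$\mathbb{C}\bigl[\,p_{2k}(x_1+\rho_1,\dots,x_r+\rho_r)\;:\;1\le k\le \lfloor p/2\rfloor\,\bigr]$$ of $\mathbb{C}[x_1,\dots,x_r]$ generated by constants and these even power sums.
   Context: $\rho_i=\frac{n-(2i-1)}{2}$ for $1\le i\le r$, and $p_k(y_1,\dots,y_r)=\sum_j y_j^k$. Casimir eigenvalues. For $\nu=(\nu_1,\dots,\nu_n)$ and an integer $p\ge 0$, let $$c_p(\nu)=\sum_{i=1}^n(\nu_i+n-i)^p\prod_{j\ne i}\Bigl(1-\frac{1}{\nu_i-\nu_j+j-i}\Bigr).$$ This rational expression is in fact a polynomial in $\nu$; it is the eigenvalue of the higher Casimir operator $\mathrm{tr}(\mathbf E^p)$ of $\mathfrak{gl}_n$ on the irreducible module of highest weight $\nu$. The restricted Casimir polynomial is $$C_p(x_1,\dots,x_r)=c_p(x_1,\dots,x_r,\underbrace{0,\dots,0}_{n-2r},-x_r,\dots,-x_1).$$ *)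

theory Defs
  imports Complex_Main
begin

text \<open>Weights are functions nat => complex, used on indices 1..n.\<close>

definition casimir_c :: "nat \<Rightarrow> nat \<Rightarrow> (nat \<Rightarrow> complex) \<Rightarrow> complex" where
  "casimir_c n p \<nu> =
     (\<Sum>i\<in>{1..n}. (\<nu> i + of_nat n - of_nat i) ^ p *
        (\<Prod>j\<in>{1..n} - {i}. (1 - 1 / (\<nu> i - \<nu> j + of_nat j - of_nat i))))"

text \<open>Denominators of the rational expression are all nonzero.\<close>
definition casimir_generic :: "nat \<Rightarrow> (nat \<Rightarrow> complex) \<Rightarrow> bool" where
  "casimir_generic n \<nu> =
     (\<forall>i\<in>{1..n}. \<forall>j\<in>{1..n}. i \<noteq> j \<longrightarrow> \<nu> i - \<nu> j + of_nat j - of_nat i \<noteq> 0)"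

definition restr_weight :: "nat \<Rightarrow> nat \<Rightarrow> (nat \<Rightarrow> complex) \<Rightarrow> nat \<Rightarrow> complex" where
  "restr_weight n r x i = (if i \<le> r then x i else if i \<le> n - r then 0 else - x (n + 1 - i))"

definition rho :: "nat \<Rightarrow> nat \<Rightarrow> complex" where
  "rho n i = (of_nat n - (2 * of_nat i - 1)) / 2"

definition psum :: "nat \<Rightarrow> nat \<Rightarrow> (nat \<Rightarrow> complex) \<Rightarrow> complex" where
  "psum r k y = (\<Sum>j\<in>{1..r}. y j ^ k)"

end

theory Submission
  imports Defs "HOL-Computational_Algebra.Formal_Power_Series"
begin


definition MM :: "(nat \<Rightarrow> 'x \<Rightarrow> complex) \<Rightarrow> nat \<Rightarrow> (nat\<Rightarrow>nat) \<Rightarrow> 'x \<Rightarrow> complex" where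
  "MM P m e x = (\<Prod>k\<in>{1..m}. P k x ^ e k)"

definition inA :: "(nat \<Rightarrow> 'x \<Rightarrow> complex) \<Rightarrow> nat \<Rightarrow> ('x \<Rightarrow> complex) \<Rightarrow> bool" where
  "inA P m f \<longleftrightarrow> (\<exists>S c. finite S \<and> (\<forall>x. f x = (\<Sum>e\<in>S. c e * MM P m e x)))"

lemma inA_gen:
  assumes "finite I" "\<And>x. f x = (\<Sum>i\<in>I. a i * MM P m (h i) x)"
  shows "inA P m f"
  unfolding inA_def
proof (intro exI conjI allI)
  show "finite (h ` I)" using assms(1) by simp
  fix x
  have "f x = (\<Sum>e\<in>h ` I. \<Sum>i\<in>{i. i \<in> I \<and> h i = e}. a i * MM P m (h i) x)"
    using assms by (simp add: sum.image_gen[OF assms(1), of _ h])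
  also have "\<dots> = (\<Sum>e\<in>h ` I. (\<Sum>i\<in>{i. i \<in> I \<and> h i = e}. a i) * MM P m e x)"
    by (intro sum.cong refl) (simp add: sum_distrib_right)
  finally show "f x = (\<Sum>e\<in>h ` I. (\<lambda>e. \<Sum>i\<in>{i. i \<in> I \<and> h i = e}. a i) e * MM P m e x)" .
qed

lemma inA_const: "inA P m (\<lambda>x. c)"
  by (rule inA_gen[of "{()}" _ "\<lambda>_. c" _ _ "\<lambda>_ _. 0"]) (auto simp: MM_def)

lemma inA_add:
  assumes "inA P m f" "inA P m g" shows "inA P m (\<lambda>x. f x + g x)"
proof -
  obtain S1 c1 where 1: "finite S1" "\<And>x. f x = (\<Sum>e\<in>S1. c1 e * MM P m e x)" using assms(1) inA_def by metis
  obtain S2 c2 where 2: "finite S2" "\<And>x. g x = (\<Sum>e\<in>S2. c2 e * MM P m e x)" using assms(2) inA_def by metis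
  show ?thesis
    by (rule inA_gen[of "S1 <+> S2" _ "case_sum c1 c2" _ _ "case_sum id id"])
       (auto simp: 1 2 sum.Plus comp_def)
qed

lemma MM_add: "MM P m (\<lambda>k. e k + e' k) x = MM P m e x * MM P m e' x"
  by (simp add: MM_def power_add prod.distrib)

lemma inA_mult:
  assumes "inA P m f" "inA P m g" shows "inA P m (\<lambda>x. f x * g x)"
proof -
  obtain S1 c1 where 1: "finite S1" "\<And>x. f x = (\<Sum>e\<in>S1. c1 e * MM P m e x)" using assms(1) inA_def by metis
  obtain S2 c2 where 2: "finite S2" "\<And>x. g x = (\<Sum>e\<in>S2. c2 e * MM P m e x)" using assms(2) inA_def by metis
  show ?thesis
  proof (rule inA_gen[of "S1 \<times> S2" _ "\<lambda>(e,e'). c1 e * c2 e'" _ _ "\<lambda>(e,e') k. e k + e' k"])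
    show "finite (S1 \<times> S2)" using 1 2 by simp
    fix x
    show "f x * g x = (\<Sum>i\<in>S1 \<times> S2. (case i of (e, e') \<Rightarrow> c1 e * c2 e') * MM P m (case i of (e, e') \<Rightarrow> \<lambda>k. e k + e' k) x)"
      unfolding 1 2 sum_product sum.cartesian_product
      by (intro sum.cong refl) (auto simp: MM_add)
  qed
qed

lemma inA_sum:
  assumes "finite I" "\<And>i. i \<in> I \<Longrightarrow> inA P m (f i)" shows "inA P m (\<lambda>x. \<Sum>i\<in>I. f i x)"
  using assms
proof (induction I rule: finite_induct)
  case empty then show ?case using inA_const[of P m 0] by simp
next
  case (insert a F) then show ?case by (simp add: inA_add)
qed

lemma inA_mono:
  assumes "inA P m f" "m \<le> m'" shows "inA P m' f"
proof -
  obtain S1 c1 where 1: "finite S1" "\<And>x. f x = (\<Sum>e\<in>S1. c1 e * MM P m e x)" using assms(1) inA_def by metis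
  have "MM P m e x = MM P m' (\<lambda>k. if k \<le> m then e k else 0) x" for e x
    unfolding MM_def
    by (rule prod.mono_neutral_cong_left) (use assms(2) in auto)
  then show ?thesis
    by (intro inA_gen[of S1 _ c1 _ _ "\<lambda>e k. if k \<le> m then e k else 0"]) (auto simp: 1)
qed

lemma inA_gen1:
  assumes "1 \<le> k" "k \<le> m" shows "inA P m (P k)"
proof (rule inA_gen[of "{()}" _ "\<lambda>_. 1" _ _ "\<lambda>_ j. if j = k then 1 else 0"])
  fix x
  have "MM P m (\<lambda>j. if j = k then 1 else 0) x = (\<Prod>j\<in>{1..m}. if j = k then P k x else 1)"
    unfolding MM_def by (intro prod.cong refl) auto
  also have "\<dots> = P k x" using assms by (simp add: prod.delta)
  finally show "P k x = (\<Sum>i\<in>{()}. 1 * MM P m (\<lambda>j. if j = k then 1 else 0) x)" by simp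
qed simp




unbundle fps_syntax

lemma fps_const_sum: "fps_const (\<Sum>i\<in>F. f i) = (\<Sum>i\<in>F. fps_const (f i))"
  by (induction F rule: infinite_finite_induct) (auto simp del: fps_const_add simp add: fps_const_add[symmetric])

lemma fps_const_aux: "fps_const (a::complex) * (1 - fps_const b) = fps_const (a * (1 - b))"
  by (simp add: algebra_simps)

lemma abstract_step:
  fixes G :: "nat \<Rightarrow> 'a::comm_ring_1"
  assumes "finite F" "\<And>i. i \<in> F \<Longrightarrow> G i * \<beta> = d i * (G i - \<beta>)"
  shows "(1 - \<beta>) * (1 - (\<Sum>i\<in>F. w i * G i)) =
         1 - (\<Sum>i\<in>F. (w i * (1 - d i)) * G i) - (1 + (\<Sum>i\<in>F. w i * d i)) * \<beta>"
proof -
  have "(\<Sum>i\<in>F. w i * G i) * \<beta> = (\<Sum>i\<in>F. w i * (G i * \<beta>))"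
    by (simp add: sum_distrib_right mult.assoc)
  also have "\<dots> = (\<Sum>i\<in>F. w i * d i * G i) - (\<Sum>i\<in>F. w i * d i) * \<beta>"
  proof -
    have "(\<Sum>i\<in>F. w i * (G i * \<beta>)) = (\<Sum>i\<in>F. w i * d i * G i - w i * d i * \<beta>)"
    proof (intro sum.cong refl)
      fix i assume "i \<in> F"
      then have "w i * (G i * \<beta>) = w i * (d i * (G i - \<beta>))" by (simp only: assms(2))
      then show "w i * (G i * \<beta>) = w i * d i * G i - w i * d i * \<beta>" by (simp add: algebra_simps)
    qed
    then show ?thesis by (simp add: sum_subtractf sum_distrib_right)
  qed
  finally have *: "(\<Sum>i\<in>F. w i * G i) * \<beta> = (\<Sum>i\<in>F. w i * d i * G i) - (\<Sum>i\<in>F. w i * d i) * \<beta>" .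
  have **: "(\<Sum>i\<in>F. (w i * (1 - d i)) * G i) = (\<Sum>i\<in>F. w i * G i) - (\<Sum>i\<in>F. w i * d i * G i)"
    by (simp add: algebra_simps sum_subtractf)
  have e1: "(1 - \<beta>) * (1 - S) = 1 - S - \<beta> + S * \<beta>" for S :: 'a by (simp add: algebra_simps)
  show ?thesis unfolding e1 * ** by (simp add: algebra_simps)
qed

definition WW :: "nat set \<Rightarrow> (nat \<Rightarrow> complex) \<Rightarrow> nat \<Rightarrow> complex" where
  "WW A l i = (\<Prod>j\<in>A - {i}. (1 - 1 / (l i - l j)))"

lemma WW_insert_other:
  assumes "finite F" "b \<notin> F" "i \<in> F"
  shows "WW (insert b F) l i = WW F l i * (1 - 1 / (l i - l b))"
proof -
  have "insert b F - {i} = insert b (F - {i})" using assms by auto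
  then show ?thesis unfolding WW_def using assms by (simp add: mult.commute)
qed

lemma WW_insert_self:
  assumes "b \<notin> F" shows "WW (insert b F) l b = (\<Prod>j\<in>F. (1 - 1 / (l b - l j)))"
  unfolding WW_def using assms by (metis Diff_insert_absorb)

lemma scalar_pf:
  assumes "finite A" "inj_on l A" "z \<notin> l ` A"
  shows "(\<Prod>i\<in>A. (1 - 1 / (z - l i))) = 1 - (\<Sum>i\<in>A. WW A l i * (1 / (z - l i)))"
  using assms
proof (induction A arbitrary: z rule: finite_induct)
  case empty then show ?case by simp
next
  case (insert b F)
  have injF: "inj_on l F" using insert by auto
  have lb: "l b \<notin> l ` F" using insert by auto
  have IH: "(\<Prod>i\<in>F. (1 - 1 / (z - l i))) = 1 - (\<Sum>i\<in>F. WW F l i * (1 / (z - l i)))"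
    using insert injF by auto
  have Wb: "WW (insert b F) l b = 1 + (\<Sum>i\<in>F. WW F l i * (1 / (l i - l b)))"
  proof -
    have "WW (insert b F) l b = 1 - (\<Sum>i\<in>F. WW F l i * (1 / (l b - l i)))"
      using WW_insert_self[OF insert(2)] insert.IH[OF injF lb] by simp
    also have "\<dots> = 1 + (\<Sum>i\<in>F. WW F l i * (1 / (l i - l b)))"
      by (simp add: sum_negf[symmetric] minus_divide_right)
    finally show ?thesis .
  qed
  have zb: "z \<noteq> l b" using insert by auto
  have step: "(1 / (z - l i)) * (1 / (z - l b)) = (1 / (l i - l b)) * (1 / (z - l i) - 1 / (z - l b))"
    if "i \<in> F" for i
  proof -
    have zi: "z \<noteq> l i" using insert.prems that by auto
    have "l i \<in> l ` F" using that by (rule imageI)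
    then have "l i \<noteq> l b" using lb by auto
    then have "l i - l b \<noteq> 0" "z - l i \<noteq> 0" "z - l b \<noteq> 0" using zi zb by auto
    then show ?thesis by (simp add: field_simps)
  qed
  have "(\<Prod>i\<in>insert b F. (1 - 1 / (z - l i))) = (1 - 1 / (z - l b)) * (1 - (\<Sum>i\<in>F. WW F l i * (1 / (z - l i))))"
    using insert IH by simp
  also have "\<dots> = 1 - (\<Sum>i\<in>F. (WW F l i * (1 - 1 / (l i - l b))) * (1 / (z - l i)))
       - (1 + (\<Sum>i\<in>F. WW F l i * (1 / (l i - l b)))) * (1 / (z - l b))"
    by (rule abstract_step) (use insert step in auto)
  also have "\<dots> = 1 - (\<Sum>i\<in>insert b F. WW (insert b F) l i * (1 / (z - l i)))"
  proof -
    have "(\<Sum>i\<in>insert b F. WW (insert b F) l i * (1 / (z - l i))) =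
       WW (insert b F) l b * (1 / (z - l b)) + (\<Sum>i\<in>F. WW (insert b F) l i * (1 / (z - l i)))"
      using insert by simp
    also have "(\<Sum>i\<in>F. WW (insert b F) l i * (1 / (z - l i))) = (\<Sum>i\<in>F. (WW F l i * (1 - 1 / (l i - l b))) * (1 / (z - l i)))"
      using insert by (intro sum.cong refl) (simp add: WW_insert_other)
    finally show ?thesis by (simp add: Wb)
  qed
  finally show ?case .
qed

definition Gs :: "complex \<Rightarrow> complex fps" where "Gs a = Abs_fps (\<lambda>n. a ^ n)"
definition gg :: "complex \<Rightarrow> complex fps" where "gg a = fps_X * Gs a"

lemma Gs_inv: "Gs a * (1 - fps_const a * fps_X) = 1"
proof -
  have "Gs a * (1 - fps_const a * fps_X) = Gs a - fps_const a * (fps_X * Gs a)"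
    by (simp add: algebra_simps)
  also have "\<dots> = 1"
    by (rule fps_ext) (auto simp: Gs_def power_Suc[symmetric] simp del: power_Suc)
  finally show ?thesis .
qed

lemma gg_nth: "gg a $ Suc q = a ^ q" "gg a $ 0 = 0"
  by (auto simp: gg_def Gs_def)

lemma gg_mult:
  assumes "a \<noteq> b" shows "gg a * gg b = fps_const (1 / (a - b)) * (gg a - gg b)"
proof -
  have "Gs a - Gs b = Gs a * Gs b * (1 - fps_const b * fps_X) - Gs a * Gs b * (1 - fps_const a * fps_X)"
    using Gs_inv[of a] Gs_inv[of b] by (metis mult.assoc mult.commute mult.right_neutral)
  also have "\<dots> = fps_const (a - b) * fps_X * Gs a * Gs b"
    by (simp add: algebra_simps fps_const_sub[symmetric] del: fps_const_sub)
  finally have 1: "Gs a - Gs b = fps_const (a - b) * fps_X * Gs a * Gs b" .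
  have "fps_const (1 / (a - b)) * (gg a - gg b) = fps_const (1 / (a - b)) * fps_const (a - b) * (fps_X * fps_X * Gs a * Gs b)"
    unfolding gg_def by (simp add: right_diff_distrib[symmetric] 1 mult.assoc mult.left_commute)
  also have "\<dots> = gg a * gg b" using assms by (simp add: gg_def algebra_simps)
  finally show ?thesis by simp
qed

lemma fps_pf:
  assumes "finite A" "inj_on l A"
  shows "(\<Prod>i\<in>A. (1 - gg (l i))) = 1 - (\<Sum>i\<in>A. fps_const (WW A l i) * gg (l i))"
  using assms
proof (induction A rule: finite_induct)
  case empty then show ?case by simp
next
  case (insert b F)
  have injF: "inj_on l F" using insert by auto
  have lb: "l b \<notin> l ` F" using insert by auto
  have Wb: "WW (insert b F) l b = 1 + (\<Sum>i\<in>F. WW F l i * (1 / (l i - l b)))"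
  proof -
    have "WW (insert b F) l b = 1 - (\<Sum>i\<in>F. WW F l i * (1 / (l b - l i)))"
      using WW_insert_self[OF insert(2)] scalar_pf[OF insert(1) injF lb] by simp
    also have "\<dots> = 1 + (\<Sum>i\<in>F. WW F l i * (1 / (l i - l b)))"
      by (simp add: sum_negf[symmetric] minus_divide_right)
    finally show ?thesis .
  qed
  have "(\<Prod>i\<in>insert b F. (1 - gg (l i))) = (1 - gg (l b)) * (1 - (\<Sum>i\<in>F. fps_const (WW F l i) * gg (l i)))"
    using insert by simp
  also have "\<dots> = 1 - (\<Sum>i\<in>F. (fps_const (WW F l i) * (1 - fps_const (1 / (l i - l b)))) * gg (l i))
       - (1 + (\<Sum>i\<in>F. fps_const (WW F l i) * fps_const (1 / (l i - l b)))) * gg (l b)"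
  proof (rule abstract_step)
    fix i assume "i \<in> F"
    then have "l i \<in> l ` F" by (rule imageI)
    then have "l i \<noteq> l b" using lb by auto
    then show "gg (l i) * gg (l b) = fps_const (1 / (l i - l b)) * (gg (l i) - gg (l b))"
      by (rule gg_mult)
  qed (use insert in auto)
  also have "(1 + (\<Sum>i\<in>F. fps_const (WW F l i) * fps_const (1 / (l i - l b)))) = fps_const (WW (insert b F) l b)"
    by (simp only: Wb fps_const_sum[symmetric] fps_const_mult fps_const_add[symmetric] fps_const_1_eq_1[symmetric])
  also have "(\<Sum>i\<in>F. (fps_const (WW F l i) * (1 - fps_const (1 / (l i - l b)))) * gg (l i))
     = (\<Sum>i\<in>F. fps_const (WW (insert b F) l i) * gg (l i))"
    using insert by (intro sum.cong refl) (simp add: WW_insert_other fps_const_aux)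
  finally show ?case using insert by (simp add: algebra_simps)
qed






definition hh :: "complex \<Rightarrow> complex fps" where
  "hh a = fps_const a * Gs a - fps_const (a + 1) * Gs (a + 1)"

lemma hh_nth: "hh a $ m = a ^ (m + 1) - (a + 1) ^ (m + 1)"
  by (simp add: hh_def Gs_def)

lemma Gs_deriv: "fps_deriv (Gs a) = fps_const a * Gs a * Gs a"
proof -
  have "fps_deriv (Gs a * (1 - fps_const a * fps_X)) = 0" using Gs_inv[of a] by simp
  then have h: "fps_deriv (Gs a) * (1 - fps_const a * fps_X) = fps_const a * Gs a"
    by (simp add: algebra_simps)
  have "fps_deriv (Gs a) = fps_deriv (Gs a) * ((1 - fps_const a * fps_X) * Gs a)"
    using Gs_inv[of a] by (simp add: mult.commute)
  also have "\<dots> = (fps_deriv (Gs a) * (1 - fps_const a * fps_X)) * Gs a" by (simp only: mult.assoc)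
  also have "\<dots> = fps_const a * Gs a * Gs a" by (simp only: h)
  finally show ?thesis .
qed

lemma one_minus_gg: "1 - gg a = (1 - fps_const (a + 1) * fps_X) * Gs a"
proof -
  have "(1 - fps_const (a + 1) * fps_X) * Gs a = Gs a * (1 - fps_const a * fps_X) - fps_X * Gs a"
    by (simp add: algebra_simps fps_const_add[symmetric] del: fps_const_add)
  then show ?thesis using Gs_inv[of a] by (simp add: gg_def)
qed

lemma deriv_factor: "fps_deriv (1 - gg a) = (1 - gg a) * hh a"
proof -
  define P where "P = 1 - fps_const (a + 1) * fps_X"
  have PG: "P * Gs (a + 1) = 1" using Gs_inv[of "a+1"] by (simp add: P_def mult.commute)
  have "fps_deriv (1 - gg a) = fps_deriv (P * Gs a)" by (simp add: one_minus_gg P_def)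
  also have "\<dots> = - fps_const (a + 1) * Gs a + P * (fps_const a * Gs a * Gs a)"
    by (simp add: P_def Gs_deriv)
  also have "\<dots> = fps_const a * P * Gs a * Gs a - fps_const (a + 1) * Gs a * (P * Gs (a + 1))"
    by (simp only: PG) (simp add: algebra_simps del: fps_const_neg)
  also have "\<dots> = P * Gs a * hh a" by (simp add: hh_def algebra_simps)
  finally show ?thesis by (simp add: one_minus_gg P_def)
qed

lemma deriv_prod:
  assumes "finite A"
  shows "fps_deriv (\<Prod>i\<in>A. (1 - gg (l i))) = (\<Prod>i\<in>A. (1 - gg (l i))) * (\<Sum>i\<in>A. hh (l i))"
  using assms
proof (induction A rule: finite_induct)
  case empty then show ?case by simp
next
  case (insert b F)
  let ?Q = "(\<Prod>i\<in>F. (1 - gg (l i)))"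
  have "fps_deriv ((1 - gg (l b)) * ?Q) = fps_deriv (1 - gg (l b)) * ?Q + (1 - gg (l b)) * fps_deriv ?Q"
    by (simp only: fps_deriv_mult add.commute)
  also have "\<dots> = ((1 - gg (l b)) * ?Q) * (hh (l b) + (\<Sum>i\<in>F. hh (l i)))"
    by (simp only: deriv_factor insert.IH) (simp add: algebra_simps)
  finally show ?case using insert by simp
qed

lemma phi_rec:
  assumes "finite A"
  shows "of_nat (N + 1) * (\<Prod>i\<in>A. (1 - gg (l i))) $ (N + 1) =
     (\<Sum>i=0..N. (\<Prod>i\<in>A. (1 - gg (l i))) $ i * (\<Sum>j\<in>A. l j ^ (N - i + 1) - (l j + 1) ^ (N - i + 1)))"
proof -
  let ?P = "(\<Prod>i\<in>A. (1 - gg (l i)))"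
  have "fps_deriv ?P $ N = (?P * (\<Sum>i\<in>A. hh (l i))) $ N"
    using deriv_prod[OF assms(1)] by simp
  then show ?thesis
    by (simp add: fps_mult_nth fps_sum_nth hh_nth)
qed

lemma phi_0: "(\<Prod>i\<in>A. (1 - gg (l i))) $ 0 = 1"
proof (induction A rule: infinite_finite_induct)
  case (insert b F) then show ?case by (simp add: fps_mult_nth gg_nth)
qed auto

lemma phi_Suc:
  assumes "finite A" "inj_on l A"
  shows "(\<Prod>i\<in>A. (1 - gg (l i))) $ Suc q = - (\<Sum>i\<in>A. WW A l i * l i ^ q)"
  unfolding fps_pf[OF assms] by (simp add: fps_sum_nth gg_nth)

lemma inA_rec:
  assumes lam: "\<And>m. inA P (m div 2) (lam m)"
    and rec: "\<And>N x. of_nat (N + 1) * phi (N + 1) x = (\<Sum>i=0..N. phi i x * lam (N - i) x)"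
    and p0: "\<And>x. phi 0 x = 1"
  shows "inA P (N div 2) (phi (N + 1))"
proof (induction N rule: less_induct)
  case (less N)
  have eq: "phi (N + 1) x = (1 / of_nat (N + 1)) * (\<Sum>i=0..N. phi i x * lam (N - i) x)" for x
    using rec[of N x] by (simp add: field_simps del: of_nat_Suc)
  have "inA P (N div 2) (\<lambda>x. phi i x * lam (N - i) x)" if "i \<in> {0..N}" for i
  proof (rule inA_mult)
    show "inA P (N div 2) (lam (N - i))" by (rule inA_mono[OF lam]) (simp add: div_le_mono)
    show "inA P (N div 2) (phi i)"
    proof (cases i)
      case 0
      have "phi 0 = (\<lambda>x. 1)" by (simp add: fun_eq_iff p0)
      then show ?thesis using 0 inA_const[of P "N div 2" 1] by simp
    next
      case (Suc j)
      then have "j < N" using that by auto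
      then have "inA P (j div 2) (phi (j + 1))" by (rule less.IH)
      then show ?thesis using Suc \<open>j < N\<close> by (auto intro: inA_mono div_le_mono)
    qed
  qed
  then have "inA P (N div 2) (\<lambda>x. \<Sum>i=0..N. phi i x * lam (N - i) x)" by (intro inA_sum) auto
  then have "inA P (N div 2) (\<lambda>x. (1 / of_nat (N + 1)) * (\<Sum>i=0..N. phi i x * lam (N - i) x))"
    by (intro inA_mult inA_const)
  moreover have "phi (N + 1) = (\<lambda>x. (1 / of_nat (N + 1)) * (\<Sum>i=0..N. phi i x * lam (N - i) x))"
    using eq by (simp only: fun_eq_iff) simp
  ultimately show ?case by simp
qed






definition PP :: "nat \<Rightarrow> nat \<Rightarrow> nat \<Rightarrow> (nat \<Rightarrow> complex) \<Rightarrow> complex" where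
  "PP r n k x = psum r (2 * k) (\<lambda>j. x j + rho n j)"

lemma rho_refl:
  assumes "1 \<le> k" "k \<le> n" shows "rho n (n + 1 - k) = - rho n k"
proof -
  have h: "of_nat (n + 1 - k) = (of_nat n + 1 - of_nat k :: complex)" using assms by (simp add: of_nat_diff)
  then show ?thesis unfolding rho_def by (simp only:) (simp add: field_simps)
qed

lemma T_split:
  assumes "n \<ge> 2 * r"
  shows "(\<Sum>i\<in>{1..n}. (restr_weight n r x i + rho n i) ^ j) =
     (1 + (-1) ^ j) * psum r j (\<lambda>k. x k + rho n k) + (\<Sum>i\<in>{r+1..n-r}. rho n i ^ j)"
proof -
  let ?f = "\<lambda>i. (restr_weight n r x i + rho n i) ^ j"
  have s1: "sum ?f {1..n} = sum ?f {1..r} + sum ?f {r+1..n}"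
    using sum.ub_add_nat[of 1 r ?f "n - r"] assms by simp
  have s2: "sum ?f {r+1..n} = sum ?f {r+1..n-r} + sum ?f {n-r+1..n}"
    using sum.ub_add_nat[of "r+1" "n-r" ?f r] assms by simp
  have p1: "sum ?f {1..r} = psum r j (\<lambda>k. x k + rho n k)"
    unfolding psum_def by (intro sum.cong refl) (simp add: restr_weight_def)
  have p2: "sum ?f {r+1..n-r} = (\<Sum>i\<in>{r+1..n-r}. rho n i ^ j)"
    by (intro sum.cong refl) (simp add: restr_weight_def)
  have "sum ?f {n-r+1..n} = (\<Sum>k\<in>{1..r}. ?f (n + 1 - k))"
    by (rule sum.reindex_bij_witness[of _ "\<lambda>i. n + 1 - i" "\<lambda>k. n + 1 - k"]) (use assms in auto)
  also have "\<dots> = (\<Sum>k\<in>{1..r}. (-1) ^ j * (x k + rho n k) ^ j)"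
  proof (intro sum.cong refl)
    fix k assume k: "k \<in> {1..r}"
    have "restr_weight n r x (n + 1 - k) = - x k" using k assms by (auto simp: restr_weight_def)
    moreover have "rho n (n + 1 - k) = - rho n k" using k assms by (intro rho_refl) auto
    ultimately show "?f (n + 1 - k) = (-1) ^ j * (x k + rho n k) ^ j"
      by (simp add: power_mult_distrib[symmetric])
  qed
  also have "\<dots> = (-1) ^ j * psum r j (\<lambda>k. x k + rho n k)"
    by (simp add: psum_def sum_distrib_left)
  finally have p3: "sum ?f {n-r+1..n} = (-1) ^ j * psum r j (\<lambda>k. x k + rho n k)" .
  show ?thesis unfolding s1 s2 p1 p2 p3 by (simp add: algebra_simps)
qed

lemma T_inA:
  assumes "n \<ge> 2 * r"
  shows "inA (PP r n) (j div 2) (\<lambda>x. \<Sum>i\<in>{1..n}. (restr_weight n r x i + rho n i) ^ j)"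
proof -
  have "inA (PP r n) (j div 2) (\<lambda>x. (1 + (-1) ^ j) * psum r j (\<lambda>k. x k + rho n k) + (\<Sum>i\<in>{r+1..n-r}. rho n i ^ j))"
  proof (intro inA_add inA_const)
    show "inA (PP r n) (j div 2) (\<lambda>x. (1 + (-1) ^ j) * psum r j (\<lambda>k. x k + rho n k))"
    proof (cases "even j")
      case False
      then show ?thesis using inA_const[of "PP r n" "j div 2" 0] by simp
    next
      case True
      show ?thesis
      proof (cases "j = 0")
        case True
        then show ?thesis using inA_const[of "PP r n" "j div 2" "2 * of_nat r"] by (simp add: psum_def)
      next
        case False
        have "inA (PP r n) (j div 2) (PP r n (j div 2))"
          by (rule inA_gen1) (use False \<open>even j\<close> in \<open>auto elim!: evenE\<close>)
        moreover have "PP r n (j div 2) = (\<lambda>x. psum r j (\<lambda>k. x k + rho n k))"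
          using \<open>even j\<close> by (simp add: PP_def fun_eq_iff)
        ultimately show ?thesis by (intro inA_mult inA_const) simp
      qed
    qed
  qed
  then show ?thesis using T_split[OF assms] by simp
qed

definition LL :: "nat \<Rightarrow> nat \<Rightarrow> (nat \<Rightarrow> complex) \<Rightarrow> nat \<Rightarrow> complex" where
  "LL n r x i = restr_weight n r x i + of_nat n - of_nat i"

lemma S_inA:
  assumes "n \<ge> 2 * r"
  shows "inA (PP r n) (k div 2) (\<lambda>x. \<Sum>i\<in>{1..n}. LL n r x i ^ k)"
proof -
  define sc :: complex where "sc = (of_nat n - 1) / 2"
  have L: "LL n r x i = (restr_weight n r x i + rho n i) + sc" for x i
    by (simp add: LL_def rho_def sc_def field_simps)
  have eq: "(\<Sum>i\<in>{1..n}. LL n r x i ^ k) =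
     (\<Sum>j\<le>k. of_nat (k choose j) * sc ^ (k - j) * (\<Sum>i\<in>{1..n}. (restr_weight n r x i + rho n i) ^ j))" for x
    unfolding L binomial_ring sum_distrib_left
    by (subst sum.swap) (simp add: algebra_simps sum_distrib_left)
  have "inA (PP r n) (k div 2) (\<lambda>x. \<Sum>j\<le>k. of_nat (k choose j) * sc ^ (k - j) * (\<Sum>i\<in>{1..n}. (restr_weight n r x i + rho n i) ^ j))"
  proof (rule inA_sum)
    fix j assume "j \<in> {..k}"
    then show "inA (PP r n) (k div 2) (\<lambda>x. of_nat (k choose j) * sc ^ (k - j) * (\<Sum>i\<in>{1..n}. (restr_weight n r x i + rho n i) ^ j))"
      by (intro inA_mult[OF inA_const] inA_mono[OF T_inA[OF assms]]) (simp add: div_le_mono)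
  qed simp
  then show ?thesis by (simp only: eq)
qed

lemma lam_inA:
  assumes "n \<ge> 2 * r"
  shows "inA (PP r n) (m div 2) (\<lambda>x. \<Sum>j\<in>{1..n}. LL n r x j ^ (m + 1) - (LL n r x j + 1) ^ (m + 1))"
proof -
  have e1: "L ^ (m + 1) - (L + 1) ^ (m + 1) = (\<Sum>k\<le>m. - of_nat (m + 1 choose k) * L ^ k)" for L :: complex
  proof -
    have b: "(L + 1) ^ Suc m = (\<Sum>k\<le>m. of_nat (Suc m choose k) * L ^ k) + L ^ Suc m"
    proof -
      have b0: "(L + 1) ^ Suc m = (\<Sum>k\<le>Suc m. of_nat (Suc m choose k) * L ^ k * 1 ^ (Suc m - k))"
        by (rule binomial_ring)
      then show ?thesis by (simp only: sum.atMost_Suc power_one mult_1_right binomial_n_n of_nat_1 mult_1_left)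
    qed
    have "L ^ (m + 1) - (L + 1) ^ (m + 1) = L ^ Suc m - (L + 1) ^ Suc m" by (simp only: Suc_eq_plus1)
    also have "\<dots> = (\<Sum>k\<le>m. - of_nat (Suc m choose k) * L ^ k)"
      by (simp only: b sum_negf mult_minus_left) (simp add: algebra_simps)
    also have "\<dots> = (\<Sum>k\<le>m. - of_nat (m + 1 choose k) * L ^ k)" by simp
    finally show ?thesis .
  qed
  have eq: "(\<Sum>j\<in>{1..n}. LL n r x j ^ (m + 1) - (LL n r x j + 1) ^ (m + 1)) =
     (\<Sum>k\<le>m. - of_nat (m + 1 choose k) * (\<Sum>j\<in>{1..n}. LL n r x j ^ k))" for x
    unfolding e1 sum_distrib_left by (rule sum.swap)
  have "inA (PP r n) (m div 2) (\<lambda>x. \<Sum>k\<le>m. - of_nat (m + 1 choose k) * (\<Sum>j\<in>{1..n}. LL n r x j ^ k))"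
  proof (rule inA_sum)
    fix k assume "k \<in> {..m}"
    then show "inA (PP r n) (m div 2) (\<lambda>x. - of_nat (m + 1 choose k) * (\<Sum>j\<in>{1..n}. LL n r x j ^ k))"
      by (intro inA_mult[OF inA_const] inA_mono[OF S_inA[OF assms]]) (simp add: div_le_mono)
  qed simp
  then show ?thesis by (simp only: eq)
qed

theorem mainTheorem3:
  fixes r n p :: nat
  assumes "r \<ge> 1" and "n \<ge> 2 * r" and "p \<ge> 1"
  shows "\<exists>(S :: (nat \<Rightarrow> nat) set) (c :: (nat \<Rightarrow> nat) \<Rightarrow> complex). finite S \<and>
     (\<forall>x :: nat \<Rightarrow> complex. casimir_generic n (restr_weight n r x) \<longrightarrow>
        casimir_c n p (restr_weight n r x) =
        (\<Sum>e\<in>S. c e * (\<Prod>k\<in>{1..p div 2}. psum r (2 * k) (\<lambda>j. x j + rho n j) ^ e k)))"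
proof -
  define phi where "phi N x = (\<Prod>i\<in>{1..n}. (1 - gg (LL n r x i))) $ N" for N x
  define lam where "lam m x = (\<Sum>j\<in>{1..n}. LL n r x j ^ (m + 1) - (LL n r x j + 1) ^ (m + 1))" for m x
  have "inA (PP r n) (p div 2) (phi (p + 1))"
  proof (rule inA_rec)
    show "inA (PP r n) (m div 2) (lam m)" for m
      unfolding lam_def using lam_inA[OF assms(2)] by simp
    show "of_nat (N + 1) * phi (N + 1) x = (\<Sum>i = 0..N. phi i x * lam (N - i) x)" for N x
      unfolding phi_def lam_def by (rule phi_rec) simp
    show "phi 0 x = 1" for x unfolding phi_def by (rule phi_0)
  qed
  then have "inA (PP r n) (p div 2) (\<lambda>x. (-1) * phi (p + 1) x)"
    by (intro inA_mult inA_const)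
  then obtain S c where S: "finite S" "\<And>x. - phi (p + 1) x = (\<Sum>e\<in>S. c e * MM (PP r n) (p div 2) e x)"
    unfolding inA_def by auto
  have "casimir_c n p (restr_weight n r x) = - phi (p + 1) x" if g: "casimir_generic n (restr_weight n r x)" for x
  proof -
    have inj: "inj_on (LL n r x) {1..n}"
    proof (rule inj_onI)
      fix i j assume ij: "i \<in> {1..n}" "j \<in> {1..n}" "LL n r x i = LL n r x j"
      show "i = j"
      proof (rule ccontr)
        assume "i \<noteq> j"
        then have "restr_weight n r x i - restr_weight n r x j + of_nat j - of_nat i \<noteq> 0"
          using g ij unfolding casimir_generic_def by auto
        moreover have "restr_weight n r x i - restr_weight n r x j + of_nat j - of_nat i = LL n r x i - LL n r x j"
          by (simp add: LL_def algebra_simps)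
        ultimately show False using ij by simp
      qed
    qed
    have "casimir_c n p (restr_weight n r x) = (\<Sum>i\<in>{1..n}. WW {1..n} (LL n r x) i * LL n r x i ^ p)"
      unfolding casimir_c_def WW_def
    proof (intro sum.cong refl)
      fix i assume "i \<in> {1..n}"
      have "(\<Prod>j\<in>{1..n} - {i}. 1 - 1 / (restr_weight n r x i - restr_weight n r x j + of_nat j - of_nat i))
          = (\<Prod>j\<in>{1..n} - {i}. 1 - 1 / (LL n r x i - LL n r x j))"
        by (intro prod.cong refl) (simp add: LL_def algebra_simps)
      then show "(restr_weight n r x i + of_nat n - of_nat i) ^ p *
          (\<Prod>j\<in>{1..n} - {i}. 1 - 1 / (restr_weight n r x i - restr_weight n r x j + of_nat j - of_nat i)) =
          (\<Prod>j\<in>{1..n} - {i}. 1 - 1 / (LL n r x i - LL n r x j)) * LL n r x i ^ p"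
        by (simp add: LL_def mult.commute)
    qed
    also have "\<dots> = - phi (Suc p) x"
      using phi_Suc[OF finite_atLeastAtMost inj, of p] by (simp add: phi_def)
    finally show ?thesis by simp
  qed
  then show ?thesis
    using S by (intro exI[of _ S] exI[of _ c]) (auto simp: MM_def PP_def)
qed


end
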